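(* In the setting of the context, let $1\le i<j\le m$ be integers and $p',q$ arbitrary integers. Then $|s_i^{p'}s_j^{q}|_{S_m}=|p'|+|q|$.
   Context: $H$ is a finitely presented group with finite generating set $T$, containing a free subgroup $F$ of rank $p$ with free basis $\{d_1,\dots,d_p\}\subset T$ (standing assumption: $\mathrm{Dist}_F^H$ admits an exponentially bounded sequence of palindromic certificates in $F$). $F_x,F_y,F_z$ are free of rank $p$ with bases $R_x=\{x_i\},R_y=\{y_i\},R_z=\{z_i\}$. $G_1=[H\ast_{\langle d_i=x_iy_i^{-1}\rangle}(F_x\times F_y\times F_z)]\times\langle s_1\rangle$; $a_i=x_iz_i$, $b_i=y_iz_i$, $R_{xz}=\{a_i\}$, $R_{yz}=\{b_i\}$; $G_2=\langle G_1,s_2\mid s_2^{-1}a_is_2=b_i,\ 1\le i\le p\rangle$; $G_k=\langle G_{k-1},s_k\mid s_k^{-1}s_1s_k=s_{k-1}\rangle$ for $k\ge3$. $S_1=T\cup R_x\cup R_y\cup R_z\cup R_{xz}\cup R_{yz}\cup\{s_1\}$, $S_k=S_{k-1}\cup\{s_k\}$; $|\cdot|_{S_m}$ is word length in $G_m$. *)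

theory Defs
  imports Main
begin

text \<open>A word over generators of type 'g is a list of letters (g, True) = g and
 (g, False) = g^-1. A presentation is given by a set of relator words; two words
 represent the same element of the presented group iff they are related by the
 congruence generated by free cancellation and insertion/deletion of relators.\<close>

type_synonym 'g word = "('g \<times> bool) list"

definition inv_word :: "'g word \<Rightarrow> 'g word" where
  "inv_word w = rev (map (\<lambda>(g, b). (g, \<not> b)) w)"

inductive word_eq :: "'g word set \<Rightarrow> 'g word \<Rightarrow> 'g word \<Rightarrow> bool" for R where
  refl: "word_eq R w w"
| sym: "word_eq R u v \<Longrightarrow> word_eq R v u"
| trans: "word_eq R u v \<Longrightarrow> word_eq R v w \<Longrightarrow> word_eq R u w"
| cancel: "word_eq R (u @ [(g, b), (g, \<not> b)] @ v) (u @ v)"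
| relator: "r \<in> R \<Longrightarrow> word_eq R (u @ r @ v) (u @ v)"

definition rel_eq :: "'g word \<Rightarrow> 'g word \<Rightarrow> 'g word" where
  "rel_eq u v = u @ inv_word v"

definition commutator :: "'g \<Rightarrow> 'g \<Rightarrow> 'g word" where
  "commutator g h = [(g, True), (h, True), (g, False), (h, False)]"

definition gen_pow :: "'g \<Rightarrow> int \<Rightarrow> 'g word" where
  "gen_pow g n = (if 0 \<le> n then replicate (nat n) (g, True) else replicate (nat (- n)) (g, False))"

definition word_length :: "'g word set \<Rightarrow> 'g set \<Rightarrow> 'g word \<Rightarrow> nat" where
  "word_length R S w = (LEAST n. \<exists>v. set (map fst v) \<subseteq> S \<and> length v = n \<and> word_eq R v w)"

definition freely_reduced :: "'g word \<Rightarrow> bool" where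
  "freely_reduced w \<longleftrightarrow> (\<forall>k. Suc k < length w \<longrightarrow> \<not> (fst (w ! k) = fst (w ! Suc k) \<and> snd (w ! k) \<noteq> snd (w ! Suc k)))"

text \<open>Generators: those of H (TG t, t \<in> T), x_i, y_i, z_i, a_i = x_i z_i, b_i = y_i z_i
 (indices i < p, i.e. i = 0..p-1 corresponds to 1..p), and s_k (k \<ge> 1).\<close>
datatype 'a gen = TG 'a | X nat | Y nat | Z nat | A nat | B nat | S nat

definition lift_word :: "'a word \<Rightarrow> 'a gen word" where
  "lift_word w = map (\<lambda>(t, b). (TG t, b)) w"

definition letter :: "'g \<Rightarrow> 'g word" where
  "letter g = [(g, True)]"

definition gens1 :: "'a set \<Rightarrow> nat \<Rightarrow> 'a gen set" where
  "gens1 T p = TG ` T \<union> X ` {..<p} \<union> Y ` {..<p} \<union> Z ` {..<p} \<union> A ` {..<p} \<union> B ` {..<p} \<union> {S 1}"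

definition gensm :: "'a set \<Rightarrow> nat \<Rightarrow> nat \<Rightarrow> 'a gen set" where
  "gensm T p m = gens1 T p \<union> S ` {2..m}"

text \<open>Relators of G_1 = [H *_{d_i = x_i y_i^-1} (F_x \<times> F_y \<times> F_z)] \<times> <s_1>,
 with the extra generators a_i, b_i defined by a_i = x_i z_i, b_i = y_i z_i.\<close>
definition rels1 :: "'a word set \<Rightarrow> 'a set \<Rightarrow> (nat \<Rightarrow> 'a) \<Rightarrow> nat \<Rightarrow> 'a gen word set" where
  "rels1 RH T d p =
     lift_word ` RH
   \<union> {commutator (X i) (Y j) | i j. i < p \<and> j < p}
   \<union> {commutator (X i) (Z j) | i j. i < p \<and> j < p}
   \<union> {commutator (Y i) (Z j) | i j. i < p \<and> j < p}
   \<union> {rel_eq (letter (TG (d i))) [(X i, True), (Y i, False)] | i. i < p}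
   \<union> {rel_eq (letter (A i)) [(X i, True), (Z i, True)] | i. i < p}
   \<union> {rel_eq (letter (B i)) [(Y i, True), (Z i, True)] | i. i < p}
   \<union> {commutator (S 1) g | g. g \<in> gens1 T p}"

definition relsm :: "'a word set \<Rightarrow> 'a set \<Rightarrow> (nat \<Rightarrow> 'a) \<Rightarrow> nat \<Rightarrow> nat \<Rightarrow> 'a gen word set" where
  "relsm RH T d p m =
     rels1 RH T d p
   \<union> {rel_eq [(S 2, False), (A i, True), (S 2, True)] (letter (B i)) | i. i < p \<and> 2 \<le> m}
   \<union> {rel_eq [(S k, False), (S 1, True), (S k, True)] (letter (S (k - 1))) | k. 3 \<le> k \<and> k \<le> m}"

end

theory Submission
  imports Defs
begin

type_synonym lt = "bool \<times> bool"

definition ilt :: "'g \<times> bool \<Rightarrow> 'g \<times> bool" where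
  "ilt x = (fst x, \<not> snd x)"

lemma ilt_ilt[simp]: "ilt (ilt x) = x" by (simp add: ilt_def)
lemma ilt_pair[simp]: "ilt (g, b) = (g, \<not> b)" by (simp add: ilt_def)

definition rs :: "('g \<times> bool) list \<Rightarrow> 'g \<times> bool \<Rightarrow> ('g \<times> bool) list" where
  "rs w x = (if w \<noteq> [] \<and> last w = ilt x then butlast w else w @ [x])"

fun rd :: "('g \<times> bool) list \<Rightarrow> bool" where
  "rd [] = True"
| "rd [x] = True"
| "rd (x # y # w) = (y \<noteq> ilt x \<and> rd (y # w))"

lemma rd_snoc: "rd (w @ [x]) = (rd w \<and> (w = [] \<or> x \<noteq> ilt (last w)))"
  by (induction w rule: rd.induct) auto

lemma rd_butlast: "rd w \<Longrightarrow> rd (butlast w)"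
proof (induction w rule: rd.induct)
  case (3 x y w)
  then show ?case by (cases w) auto
qed auto

lemma ilt_eq_iff: "(x = ilt y) = (ilt x = y)" by auto

lemma rd_rs: "rd w \<Longrightarrow> rd (rs w x)"
proof (cases "w \<noteq> [] \<and> last w = ilt x")
  case True
  assume "rd w"
  then show ?thesis using True by (simp add: rs_def rd_butlast)
next
  case False
  assume "rd w"
  moreover have "w = [] \<or> x \<noteq> ilt (last w)" using False by (cases x; cases "last w") auto
  moreover have "rs w x = w @ [x]" using False unfolding rs_def by auto
  ultimately show ?thesis by (simp add: rd_snoc)
qed

lemma rs_inv: assumes "rd w" shows "rs (rs w x) (ilt x) = w"
proof (cases "w \<noteq> [] \<and> last w = ilt x")
  case True
  then have w: "w = butlast w @ [ilt x]" by (metis append_butlast_last_id)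
  have "rd (butlast w @ [ilt x])" using assms w by simp
  then have "butlast w = [] \<or> ilt x \<noteq> ilt (last (butlast w))" by (simp only: rd_snoc)
  then have nb: "\<not> (butlast w \<noteq> [] \<and> last (butlast w) = ilt (ilt x))" by auto
  have e1: "rs w x = butlast w" using True unfolding rs_def by simp
  have e2: "rs (butlast w) (ilt x) = butlast w @ [ilt x]" using nb unfolding rs_def by auto
  show ?thesis by (subst e1, subst e2, rule w[symmetric])
next
  case False
  then show ?thesis unfolding rs_def by auto
qed

lemma rs_inv1[simp]: "rd w \<Longrightarrow> rs (rs w (g, b)) (g, \<not> b) = w"
  using rs_inv[of w "(g,b)"] by simp
lemma rs_inv2[simp]: "rd w \<Longrightarrow> rs (rs w (g, \<not> b)) (g, b) = w"
  using rs_inv[of w "(g,\<not>b)"] by simp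

definition act :: "('g \<times> bool) list \<Rightarrow> ('g \<times> bool) list \<Rightarrow> ('g \<times> bool) list" where
  "act y w = foldl rs y w"

lemma act_Nil[simp]: "act y [] = y" by (simp add: act_def)
lemma act_Cons[simp]: "act y (x # w) = act (rs y x) w" by (simp add: act_def)
lemma act_append[simp]: "act y (u @ v) = act (act y u) v" by (simp add: act_def)

lemma rd_act: "rd y \<Longrightarrow> rd (act y w)"
  by (induction w arbitrary: y) (auto simp: rd_rs)

lemma inv_word_Nil[simp]: "inv_word [] = []" by (simp add: inv_word_def)
lemma inv_word_Cons[simp]: "inv_word (x # w) = inv_word w @ [ilt x]"
  by (cases x) (simp add: inv_word_def)
lemma inv_word_append[simp]: "inv_word (u @ v) = inv_word v @ inv_word u"
  by (simp add: inv_word_def)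
lemma inv_word_inv_word[simp]: "inv_word (inv_word w) = w"
  by (induction w) auto

lemma act_cancel: "rd y \<Longrightarrow> act y (Wd @ inv_word Wd) = y"
proof (induction Wd arbitrary: y)
  case (Cons x Wd)
  have "act y ((x # Wd) @ inv_word (x # Wd)) = rs (act (rs y x) (Wd @ inv_word Wd)) (ilt x)" by simp
  also have "\<dots> = rs (rs y x) (ilt x)" using Cons.IH[OF rd_rs[OF Cons.prems]] by simp
  also have "\<dots> = y" using rs_inv[OF Cons.prems] by simp
  finally show ?case .
qed simp


lemma act_cancel2: "rd y \<Longrightarrow> act y (inv_word Wd @ Wd) = y"
  using act_cancel[of y "inv_word Wd"] by simp

datatype st = K0 "lt list" | H1 "lt list" | Ea "lt list" | Ec "lt list"

fun sv :: "st \<Rightarrow> lt list" where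
  "sv (K0 v) = v" | "sv (H1 v) = v" | "sv (Ea v) = v" | "sv (Ec v) = v"

fun cls :: "st \<Rightarrow> nat" where
  "cls (K0 v) = 0" | "cls (H1 v) = 2" | "cls (Ea v) = 1" | "cls (Ec v) = 2"

fun step :: "st \<Rightarrow> lt \<Rightarrow> st" where
  "step (K0 v) (g, e) = (if g then (if e then Ea v else H1 v) else K0 (rs v (False, e)))"
| "step (H1 v) (g, e) = (if g then (if e then K0 v else Ec v) else H1 (rs v (True, e)))"
| "step (Ea v) (g, e) = (if g then Ea v else Ea (rs v (False, e)))"
| "step (Ec v) (g, e) = (if g then Ec v else Ec (rs v (True, e)))"

definition scan :: "lt list \<Rightarrow> st" where "scan h = foldl step (K0 []) h"

lemma scan_Nil[simp]: "scan [] = K0 []" by (simp add: scan_def)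
lemma scan_snoc[simp]: "scan (h @ [x]) = step (scan h) x" by (simp add: scan_def)

definition out :: "nat \<Rightarrow> lt \<Rightarrow> lt" where
  "out c x = (if c = 0 then x else if c = 1 then (False, snd x) else (True, snd x))"

lemma rd_step: "rd (sv s) \<Longrightarrow> rd (sv (step s x))"
  by (cases s; cases x) (auto simp: rd_rs)

lemma rd_scan: "rd (sv (scan h))"
  by (induction h rule: rev_induct) (auto simp: rd_step)

definition Rel :: "lt \<Rightarrow> st \<Rightarrow> st \<Rightarrow> bool" where
  "Rel x s s' = (s' = step s x \<or> s = step s' (ilt x))"

lemma scan_rel: "Rel x (scan h) (scan (rs h x))"
proof (cases "h \<noteq> [] \<and> last h = ilt x")
  case True
  then have h: "h = butlast h @ [ilt x]" by (metis append_butlast_last_id)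
  have "scan h = step (scan (butlast h)) (ilt x)" by (subst h) simp
  then show ?thesis using True unfolding Rel_def rs_def by simp
next
  case False
  then show ?thesis unfolding Rel_def rs_def by auto
qed

lemma rel_a: "rd (sv s) \<Longrightarrow> rd (sv s') \<Longrightarrow> Rel (False, e) s s' \<Longrightarrow>
   cls s' = cls s \<and> sv s' = rs (sv s) (out (cls s) (False, e))"
  by (cases s; cases s') (auto simp: Rel_def out_def)

lemma rel_a2: "rd (sv s) \<Longrightarrow> rd (sv s') \<Longrightarrow> Rel (False, e) s s' \<Longrightarrow>
   s' = (case s of K0 v \<Rightarrow> K0 (rs v (False, e)) | H1 v \<Rightarrow> H1 (rs v (True, e))
     | Ea v \<Rightarrow> Ea (rs v (False, e)) | Ec v \<Rightarrow> Ec (rs v (True, e)))"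
  by (cases s; cases s') (auto simp: Rel_def)

lemma rel_t: "Rel (True, e) s s' \<Longrightarrow> sv s' = sv s"
  by (cases s; cases s'; cases e) (auto simp: Rel_def)

lemma rel_tf: "Rel (True, False) s s1 \<Longrightarrow>
  (case s of K0 v \<Rightarrow> s1 = H1 v | H1 v \<Rightarrow> s1 = Ec v | Ea v \<Rightarrow> s1 = Ea v \<or> s1 = K0 v | Ec v \<Rightarrow> s1 = Ec v)"
  by (cases s; cases s1) (auto simp: Rel_def)

lemma rel_tt: "Rel (True, True) s s1 \<Longrightarrow>
  (case s of K0 v \<Rightarrow> s1 = Ea v | H1 v \<Rightarrow> s1 = K0 v | Ea v \<Rightarrow> s1 = Ea v | Ec v \<Rightarrow> s1 = Ec v \<or> s1 = H1 v)"
  by (cases s; cases s1) (auto simp: Rel_def)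

lemma rel_c:
  assumes "rd (sv s)" "rd (sv s1)" "rd (sv s2)"
    and r1: "Rel (True, False) s s1" and r2: "Rel (False, e) s1 s2" and r3: "Rel (True, True) s2 s3"
  shows "cls s3 = cls s \<and> sv s3 = rs (sv s) (out (cls s) (True, e))"
proof -
  have a: "s2 = (case s1 of K0 v \<Rightarrow> K0 (rs v (False, e)) | H1 v \<Rightarrow> H1 (rs v (True, e))
     | Ea v \<Rightarrow> Ea (rs v (False, e)) | Ec v \<Rightarrow> Ec (rs v (True, e)))"
    using rel_a2 assms by blast
  show ?thesis
  proof (cases s)
    case (K0 v)
    then have "s1 = H1 v" using rel_tf[OF r1] by simp
    then show ?thesis using a rel_tt[OF r3] K0 by (auto simp: out_def)
  next
    case (H1 v)
    then have "s1 = Ec v" using rel_tf[OF r1] by simp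
    then show ?thesis using a rel_tt[OF r3] H1 by (auto simp: out_def)
  next
    case (Ea v)
    then have "s1 = Ea v \<or> s1 = K0 v" using rel_tf[OF r1] by simp
    then show ?thesis using a rel_tt[OF r3] Ea by (auto simp: out_def)
  next
    case (Ec v)
    then have "s1 = Ec v" using rel_tf[OF r1] by simp
    then show ?thesis using a rel_tt[OF r3] Ec by (auto simp: out_def)
  qed
qed

fun psil :: "lt \<Rightarrow> lt list" where
  "psil (g, e) = (if g then [(True, False), (False, e), (True, True)] else [(False, e)])"

definition psi :: "lt list \<Rightarrow> lt list" where "psi w = concat (map psil w)"

lemma psi_Nil[simp]: "psi [] = []" by (simp add: psi_def)
lemma psi_Cons[simp]: "psi (x # w) = psil x @ psi w" by (simp add: psi_def)
lemma psi_append[simp]: "psi (u @ w) = psi u @ psi w" by (simp add: psi_def)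

lemma one_gen: "cls (scan (act h (psil x))) = cls (scan h) \<and>
   sv (scan (act h (psil x))) = rs (sv (scan h)) (out (cls (scan h)) x)"
proof (cases x)
  case (Pair g e)
  show ?thesis
  proof (cases g)
    case False
    then show ?thesis using Pair rel_a[OF rd_scan rd_scan scan_rel] by simp
  next
    case True
    let ?h1 = "rs h (True, False)" let ?h2 = "rs ?h1 (False, e)" let ?h3 = "rs ?h2 (True, True)"
    have "act h (psil x) = ?h3" using Pair True by simp
    moreover have "cls (scan ?h3) = cls (scan h) \<and> sv (scan ?h3) = rs (sv (scan h)) (out (cls (scan h)) (True, e))"
      by (rule rel_c[OF rd_scan rd_scan rd_scan scan_rel scan_rel scan_rel])
    ultimately show ?thesis using Pair True by simp
  qed
qed

lemma word_lem: "cls (scan (act h (psi u))) = cls (scan h) \<and>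
   sv (scan (act h (psi u))) = act (sv (scan h)) (map (out (cls (scan h))) u)"
proof (induction u arbitrary: h)
  case (Cons x u)
  have "act h (psi (x # u)) = act (act h (psil x)) (psi u)" by simp
  then show ?case using Cons[of "act h (psil x)"] one_gen[of h x] by simp
qed simp

definition sg :: "'g \<times> bool \<Rightarrow> int" where "sg x = (if snd x then 1 else -1)"
definition sig :: "('g \<times> bool) list \<Rightarrow> int" where "sig w = sum_list (map sg w)"
definition ea :: "lt list \<Rightarrow> int" where "ea w = sum_list (map (\<lambda>x. if fst x then 0 else sg x) w)"
definition et :: "lt list \<Rightarrow> int" where "et w = sum_list (map (\<lambda>x. if fst x then sg x else 0) w)"

lemma sg_ilt[simp]: "sg (ilt x) = - sg x" by (simp add: sg_def ilt_def)

lemma sig_Nil[simp]: "sig [] = 0" by (simp add: sig_def)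
lemma sig_Cons[simp]: "sig (x # w) = sg x + sig w" by (simp add: sig_def)
lemma sig_append[simp]: "sig (u @ w) = sig u + sig w" by (simp add: sig_def)
lemma ea_Nil[simp]: "ea [] = 0" by (simp add: ea_def)
lemma ea_Cons[simp]: "ea (x # w) = (if fst x then 0 else sg x) + ea w" by (simp add: ea_def)
lemma ea_append[simp]: "ea (u @ w) = ea u + ea w" by (simp add: ea_def)
lemma et_Nil[simp]: "et [] = 0" by (simp add: et_def)
lemma et_Cons[simp]: "et (x # w) = (if fst x then sg x else 0) + et w" by (simp add: et_def)
lemma et_append[simp]: "et (u @ w) = et u + et w" by (simp add: et_def)

lemma sig_inv[simp]: "sig (inv_word w) = - sig w" by (induction w) auto
lemma ea_inv[simp]: "ea (inv_word w) = - ea w" by (induction w) (auto simp: ilt_def sg_def)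
lemma et_inv[simp]: "et (inv_word w) = - et w" by (induction w) (auto simp: ilt_def sg_def)

lemma ea_rs: "ea (rs w x) = ea w + (if fst x then 0 else sg x)"
proof (cases "w \<noteq> [] \<and> last w = ilt x")
  case True
  then have w: "w = butlast w @ [ilt x]" by (metis append_butlast_last_id)
  have "ea w = ea (butlast w) + ea [ilt x]" by (subst w) simp
  then show ?thesis using True by (simp add: rs_def ilt_def sg_def)
next
  case False
  then show ?thesis by (auto simp: rs_def)
qed

lemma et_rs: "et (rs w x) = et w + (if fst x then sg x else 0)"
proof (cases "w \<noteq> [] \<and> last w = ilt x")
  case True
  then have w: "w = butlast w @ [ilt x]" by (metis append_butlast_last_id)
  have "et w = et (butlast w) + et [ilt x]" by (subst w) simp
  then show ?thesis using True by (simp add: rs_def ilt_def sg_def)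
next
  case False
  then show ?thesis by (auto simp: rs_def)
qed

lemma ea_act: "ea (act y w) = ea y + ea w"
  by (induction w arbitrary: y) (auto simp: ea_rs)
lemma et_act: "et (act y w) = et y + et w"
  by (induction w arbitrary: y) (auto simp: et_rs)

lemma pw_step: assumes "rd v"
  shows "act (rs v (g0, b)) (gen_pow g0 n) = act v (gen_pow g0 (sg (g0, b) + n))"
proof (cases b)
  case True
  show ?thesis
  proof (cases "0 \<le> n")
    case nn: True
    have "nat (1 + n) = Suc (nat n)" using nn by simp
    then have "gen_pow g0 (1 + n) = (g0, True) # gen_pow g0 n" using nn by (simp add: gen_pow_def)
    then show ?thesis using True by (simp add: sg_def)
  next
    case False
    have "nat (- n) = Suc (nat (- (1 + n)))" using False by simp
    then have "gen_pow g0 n = (g0, False) # gen_pow g0 (1 + n)" using False by (simp add: gen_pow_def)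
    then show ?thesis using True assms rs_inv1[OF assms, of g0 True] by (simp add: sg_def)
  qed
next
  case False
  show ?thesis
  proof (cases "0 < n")
    case nn: True
    have "nat n = Suc (nat (n - 1))" using nn by simp
    then have "gen_pow g0 n = (g0, True) # gen_pow g0 (- 1 + n)" using nn by (simp add: gen_pow_def)
    then show ?thesis using False assms rs_inv2[OF assms, of g0 True] by (simp add: sg_def)
  next
    case nn: False
    have "nat (- (- 1 + n)) = Suc (nat (- n))" using nn by simp
    then have "gen_pow g0 (- 1 + n) = (g0, False) # gen_pow g0 n" using nn by (simp add: gen_pow_def)
    then show ?thesis using False by (simp add: sg_def)
  qed
qed

lemma act_same: "rd v \<Longrightarrow> act v (map (\<lambda>x. (g0, snd x)) u) = act v (gen_pow g0 (sig u))"
proof (induction u arbitrary: v)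
  case Nil
  then show ?case by (simp add: gen_pow_def)
next
  case (Cons x u)
  have "act v (map (\<lambda>x. (g0, snd x)) (x # u)) = act (rs v (g0, snd x)) (map (\<lambda>x. (g0, snd x)) u)" by simp
  also have "\<dots> = act (rs v (g0, snd x)) (gen_pow g0 (sig u))" using Cons rd_rs by blast
  also have "\<dots> = act v (gen_pow g0 (sg (g0, snd x) + sig u))" using pw_step[OF Cons.prems] by blast
  finally show ?case by (simp add: sg_def)
qed

lemma psil_ilt: "psil (ilt x) = inv_word (psil x)"
  by (cases x) auto
lemma psi_inv[simp]: "psi (inv_word u) = inv_word (psi u)"
  by (induction u) (auto simp: psil_ilt)

lemma funpow_psi_append[simp]: "(psi ^^ n) (u @ w) = (psi ^^ n) u @ (psi ^^ n) w"
  by (induction n) auto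
lemma funpow_psi_inv[simp]: "(psi ^^ n) (inv_word u) = inv_word ((psi ^^ n) u)"
  by (induction n) auto
lemma funpow_psi_a[simp]: "(psi ^^ n) [(False, True)] = [(False, True)]"
  by (induction n) auto
lemma funpow_psi_Nil[simp]: "(psi ^^ n) [] = []"
  by (induction n) auto

lemma sig_psil[simp]: "sig (psil x) = sg x" by (cases x) (auto simp: sg_def)
lemma ea_psil[simp]: "ea (psil x) = sg x" by (cases x) (auto simp: sg_def)
lemma et_psil[simp]: "et (psil x) = 0" by (cases x) (auto simp: sg_def)
lemma sig_psi[simp]: "sig (psi u) = sig u" by (induction u) auto
lemma ea_psi[simp]: "ea (psi u) = sig u" by (induction u) auto
lemma et_psi[simp]: "et (psi u) = 0" by (induction u) auto
lemma sig_funpow[simp]: "sig ((psi ^^ n) u) = sig u" by (induction n) auto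

definition gen :: "nat \<Rightarrow> nat \<Rightarrow> lt list" where
  "gen k l = (if l = 1 then [(False, True)] else (psi ^^ (k - l)) [(True, True)])"

lemma sig_gen[simp]: "sig (gen k l) = 1" by (simp add: gen_def sg_def)

lemma gen_top: "2 \<le> k \<Longrightarrow> gen k k = [(True, True)]" by (simp add: gen_def)

lemma gen_psi: assumes "1 \<le> l" "l < k" shows "gen k l = psi (gen (k - 1) l)"
proof (cases "l = 1")
  case True
  then show ?thesis by (simp add: gen_def)
next
  case False
  have "k - l = Suc (k - 1 - l)" using assms by simp
  then show ?thesis using False by (simp add: gen_def)
qed

lemma gen_exps_low: "1 \<le> l \<Longrightarrow> l < k \<Longrightarrow> ea (gen k l) = 1 \<and> et (gen k l) = 0"
  using gen_psi by simp

lemma gen_exps_top: "2 \<le> k \<Longrightarrow> ea (gen k k) = 0 \<and> et (gen k k) = 1"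
  by (simp add: gen_top sg_def)

definition GS :: "nat \<Rightarrow> lt list set" where
  "GS k = {g. \<exists>l. 1 \<le> l \<and> l \<le> k \<and> (g = gen k l \<or> g = inv_word (gen k l))}"

lemma GS_exps: assumes "2 \<le> k" "g \<in> GS k" shows "\<bar>ea g\<bar> + \<bar>et g\<bar> = 1"
proof -
  obtain l where l: "1 \<le> l" "l \<le> k" "g = gen k l \<or> g = inv_word (gen k l)"
    using assms unfolding GS_def by blast
  show ?thesis
  proof (cases "l = k")
    case True
    then show ?thesis using l gen_exps_top[OF assms(1)] by auto
  next
    case False
    then have "l < k" using l by simp
    then show ?thesis using l gen_exps_low[of l k] by auto
  qed
qed

lemma single_GS: assumes "2 \<le> k" shows "[(g0, b)] \<in> GS k"
proof (cases g0)
  case True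
  have "[(g0, b)] = gen k k \<or> [(g0, b)] = inv_word (gen k k)"
    using True gen_top[OF assms] by (cases b) auto
  then show ?thesis unfolding GS_def using assms by (intro CollectI exI[of _ k]) auto
next
  case False
  have "[(g0, b)] = gen k 1 \<or> [(g0, b)] = inv_word (gen k 1)"
    using False by (cases b) (auto simp: gen_def)
  then show ?thesis unfolding GS_def using assms by (intro CollectI exI[of _ 1]) auto
qed

fun Dn :: "nat \<Rightarrow> lt list \<Rightarrow> nat" where
  "Dn 0 h = nat \<bar>ea h\<bar> + nat \<bar>et h\<bar>"
| "Dn (Suc n) h = Dn n (sv (scan h))"

lemma Dn_Nil: "Dn n [] = 0" by (induction n) auto

lemma lip: "2 \<le> j \<Longrightarrow> g \<in> GS (j + n) \<Longrightarrow> Dn n (act h g) \<le> Dn n h + 1"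
proof (induction n arbitrary: h g)
  case 0
  have e: "\<bar>ea g\<bar> + \<bar>et g\<bar> = 1" using GS_exps 0 by simp
  have a: "int (Dn 0 (act h g)) = \<bar>ea h + ea g\<bar> + \<bar>et h + et g\<bar>" by (simp add: ea_act et_act)
  have b: "int (Dn 0 h) = \<bar>ea h\<bar> + \<bar>et h\<bar>" by simp
  have "\<bar>ea h + ea g\<bar> \<le> \<bar>ea h\<bar> + \<bar>ea g\<bar>" "\<bar>et h + et g\<bar> \<le> \<bar>et h\<bar> + \<bar>et g\<bar>"
    by (rule abs_triangle_ineq)+
  then have "int (Dn 0 (act h g)) \<le> int (Dn 0 h) + 1" using a b e by linarith
  then show ?case by linarith
next
  case (Suc n)
  let ?k = "j + Suc n"
  obtain l where l: "1 \<le> l" "l \<le> ?k" "g = gen ?k l \<or> g = inv_word (gen ?k l)"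
    using Suc.prems unfolding GS_def by blast
  show ?case
  proof (cases "l = ?k")
    case True
    then obtain e where g: "g = [(True, e)]"
      using l gen_top[of ?k] Suc.prems by auto
    have "sv (scan (rs h (True, e))) = sv (scan h)" by (rule rel_t[OF scan_rel])
    then show ?thesis using g by simp
  next
    case False
    then have lk: "l < ?k" using l by simp
    define u where "u = (if g = gen ?k l then gen (j + n) l else inv_word (gen (j + n) l))"
    have uGS: "u \<in> GS (j + n)" unfolding u_def GS_def using l lk by auto
    have gu: "g = psi u" unfolding u_def using l gen_psi[OF l(1) lk] by auto
    let ?v = "sv (scan h)" let ?c = "cls (scan h)"
    have w: "sv (scan (act h (psi u))) = act ?v (map (out ?c) u)" using word_lem by blast
    show ?thesis
    proof (cases "?c = 0")
      case True
      have "map (out ?c) u = u" using True by (intro map_idI) (simp add: out_def)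
      then have "Dn (Suc n) (act h g) = Dn n (act ?v u)" using gu w by simp
      also have "\<dots> \<le> Dn n ?v + 1" using Suc.IH[OF Suc.prems(1) uGS] .
      finally show ?thesis by simp
    next
      case False
      define g0 where "g0 = (?c \<noteq> 1)"
      have m: "map (out ?c) u = map (\<lambda>x. (g0, snd x)) u" using False by (intro map_cong[OF HOL.refl]) (simp add: out_def g0_def)
      have "act ?v (map (out ?c) u) = act ?v (gen_pow g0 (sig u))"
        unfolding m by (rule act_same[OF rd_scan])
      moreover have "sig u = 1 \<or> sig u = -1" unfolding u_def by auto
      ultimately obtain b where "act ?v (map (out ?c) u) = act ?v [(g0, b)]"
        by (auto simp: gen_pow_def)
      then have "Dn (Suc n) (act h g) = Dn n (act ?v [(g0, b)])" using gu w by simp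
      also have "\<dots> \<le> Dn n ?v + 1"
        using Suc.IH[OF Suc.prems(1) single_GS] Suc.prems(1) by simp
      finally show ?thesis by simp
    qed
  qed
qed

definition img :: "nat \<Rightarrow> 'a gen \<Rightarrow> lt list" where
  "img m g = (case g of S k \<Rightarrow> if 1 \<le> k \<and> k \<le> m then gen m k else [] | _ \<Rightarrow> [])"

definition phil :: "nat \<Rightarrow> 'a gen \<times> bool \<Rightarrow> lt list" where
  "phil m x = (if snd x then img m (fst x) else inv_word (img m (fst x)))"

definition phi :: "nat \<Rightarrow> 'a gen word \<Rightarrow> lt list" where
  "phi m w = concat (map (phil m) w)"

lemma phi_Nil[simp]: "phi m [] = []" by (simp add: phi_def)
lemma phi_Cons[simp]: "phi m (x # w) = phil m x @ phi m w" by (simp add: phi_def)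
lemma phi_append[simp]: "phi m (u @ w) = phi m u @ phi m w" by (simp add: phi_def)

lemma phil_ilt: "phil m (ilt x) = inv_word (phil m x)"
  by (cases x) (auto simp: phil_def ilt_def)
lemma phi_inv[simp]: "phi m (inv_word w) = inv_word (phi m w)"
  by (induction w) (auto simp: phil_ilt)

lemma word_eq_act:
  assumes "word_eq R u v" and "\<And>r y. r \<in> R \<Longrightarrow> rd y \<Longrightarrow> act y (phi m r) = y"
  shows "rd y \<Longrightarrow> act y (phi m u) = act y (phi m v)"
  using assms(1)
proof (induction arbitrary: y rule: word_eq.induct)
  case (refl w)
  then show ?case by simp
next
  case (sym u v)
  then show ?case by simp
next
  case (trans u v w)
  then show ?case by simp
next
  case (cancel u g b v)
  have i: "phil m (g, \<not> b) = inv_word (phil m (g, b))" using phil_ilt[of m "(g, b)"] by simp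
  have "act y (phi m (u @ [(g, b), (g, \<not> b)] @ v))
      = act (act (act y (phi m u)) (phil m (g, b) @ inv_word (phil m (g, b)))) (phi m v)"
    using i by simp
  also have "\<dots> = act (act y (phi m u)) (phi m v)"
    using act_cancel[OF rd_act[OF cancel.prems]] by simp
  finally show ?case by simp
next
  case (relator r u v)
  have "act y (phi m (u @ r @ v)) = act (act (act y (phi m u)) (phi m r)) (phi m v)" by simp
  also have "\<dots> = act (act y (phi m u)) (phi m v)"
    using assms(2)[OF relator.hyps rd_act[OF relator.prems]] by simp
  finally show ?case by simp
qed

lemma phi_lift: "phi m (lift_word w) = []"
  by (induction w) (auto simp: lift_word_def phil_def img_def)

lemma gen_rel: assumes "3 \<le> k" "k \<le> m"
  shows "gen m (k - 1) = inv_word (gen m k) @ [(False, True)] @ gen m k"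
proof -
  have e: "m - (k - 1) = Suc (m - k)" using assms by simp
  have "gen m (k - 1) = (psi ^^ (m - (k - 1))) [(True, True)]"
    using assms unfolding gen_def by simp
  also have "\<dots> = (psi ^^ (m - k)) (psi [(True, True)])"
    by (simp only: e funpow_Suc_right o_apply)
  also have "psi [(True, True)] = inv_word [(True, True)] @ [(False, True)] @ [(True, True)]"
    by simp
  finally have fin: "gen m (k - 1) = (psi ^^ (m - k)) (inv_word [(True, True)] @ [(False, True)] @ [(True, True)])" .
  have gk: "(psi ^^ (m - k)) [(True, True)] = gen m k" using assms by (simp add: gen_def)
  show ?thesis using fin by (simp only: funpow_psi_append funpow_psi_inv funpow_psi_a gk)
qed

lemma img_S1: "1 \<le> m \<Longrightarrow> img m (S 1) = [(False, True)]"
  by (simp add: img_def gen_def)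

lemma gens1_img: "g \<in> gens1 T p \<Longrightarrow> img m g = [] \<or> g = S 1"
  by (auto simp: gens1_def img_def)

lemma rel_triv: fixes RH :: "'a word set" assumes m2: "2 \<le> m" and r: "r \<in> relsm RH T d p m"
  shows "\<exists>W. phi m r = W @ inv_word W"
proof -
  have "r \<in> lift_word ` RH
   \<or> (\<exists>i j. r = commutator (X i) (Y j))
   \<or> (\<exists>i j. r = commutator (X i) (Z j))
   \<or> (\<exists>i j. r = commutator (Y i) (Z j))
   \<or> (\<exists>i. r = rel_eq (letter (TG (d i))) [(X i, True), (Y i, False)])
   \<or> (\<exists>i. r = rel_eq (letter (A i)) [(X i, True), (Z i, True)])
   \<or> (\<exists>i. r = rel_eq (letter (B i)) [(Y i, True), (Z i, True)])
   \<or> (\<exists>g. g \<in> gens1 T p \<and> r = commutator (S 1) g)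
   \<or> (\<exists>i. r = rel_eq [(S 2, False), (A i, True), (S 2, True)] (letter (B i)))
   \<or> (\<exists>k. 3 \<le> k \<and> k \<le> m \<and> r = rel_eq [(S k, False), (S 1, True), (S k, True)] (letter (S (k - 1))))"
    using r unfolding relsm_def rels1_def by blast
  then show ?thesis
  proof (elim disjE exE conjE)
    assume "r \<in> lift_word ` RH"
    then show ?thesis using phi_lift by (intro exI[of _ "[]"]) auto
  next
    fix i j assume "r = commutator (X i) (Y j)"
    then show ?thesis by (intro exI[of _ "[]"]) (simp add: commutator_def phil_def img_def)
  next
    fix i j assume "r = commutator (X i) (Z j)"
    then show ?thesis by (intro exI[of _ "[]"]) (simp add: commutator_def phil_def img_def)
  next
    fix i j assume "r = commutator (Y i) (Z j)"
    then show ?thesis by (intro exI[of _ "[]"]) (simp add: commutator_def phil_def img_def)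
  next
    fix i assume "r = rel_eq (letter (TG (d i))) [(X i, True), (Y i, False)]"
    then show ?thesis by (intro exI[of _ "[]"]) (simp add: rel_eq_def letter_def phil_def img_def)
  next
    fix i assume "r = rel_eq (letter (A i)) [(X i, True), (Z i, True)]"
    then show ?thesis by (intro exI[of _ "[]"]) (simp add: rel_eq_def letter_def phil_def img_def)
  next
    fix i assume "r = rel_eq (letter (B i)) [(Y i, True), (Z i, True)]"
    then show ?thesis by (intro exI[of _ "[]"]) (simp add: rel_eq_def letter_def phil_def img_def)
  next
    fix g assume g: "g \<in> gens1 T p" and rr: "r = commutator (S 1) g"
    have s1: "img m (S 1 :: 'a gen) = [(False, True)]" using m2 by (intro img_S1) simp
    show ?thesis
    proof (cases "img m g = []")
      case True
      then show ?thesis using rr s1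
        by (intro exI[of _ "[(False, True)]"]) (simp add: commutator_def phil_def)
    next
      case False
      then have "g = S 1" using gens1_img[OF g] by blast
      then show ?thesis using rr s1
        by (intro exI[of _ "[(False, True), (False, True)]"]) (simp add: commutator_def phil_def)
    qed
  next
    fix i assume rr: "r = rel_eq [(S 2, False), (A i, True), (S 2, True)] (letter (B i))"
    show ?thesis using rr
      by (intro exI[of _ "inv_word (img m (S 2 :: 'a gen))"]) (simp add: rel_eq_def letter_def phil_def img_def)
  next
    fix k assume k: "3 \<le> k" "k \<le> m"
      and rr: "r = rel_eq [(S k, False), (S 1, True), (S k, True)] (letter (S (k - 1)))"
    have i1: "img m (S k :: 'a gen) = gen m k" using k by (simp add: img_def)
    have i2: "img m (S (k - 1) :: 'a gen) = gen m (k - 1)" using k by (auto simp: img_def)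
    have s1: "img m (S 1 :: 'a gen) = [(False, True)]" using m2 by (intro img_S1) simp
    show ?thesis using rr i1 i2 s1 gen_rel[OF k]
      by (intro exI[of _ "gen m (k - 1)"]) (simp add: rel_eq_def letter_def phil_def)
  qed
qed

lemma rel_act: "2 \<le> m \<Longrightarrow> r \<in> relsm RH T d p m \<Longrightarrow> rd y \<Longrightarrow> act y (phi m r) = y"
  using rel_triv act_cancel by metis

lemma phil_GS: assumes "fst x \<in> gensm T p m" "2 \<le> m"
  shows "phil m x = [] \<or> phil m x \<in> GS m"
proof (cases "img m (fst x) = []")
  case True
  then show ?thesis by (simp add: phil_def)
next
  case False
  then obtain k where k: "fst x = S k" "1 \<le> k" "k \<le> m"
    using assms by (auto simp: gensm_def gens1_def img_def split: gen.splits)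
  then have "img m (fst x) = gen m k" by (simp add: img_def)
  then show ?thesis using k unfolding GS_def phil_def by auto
qed

lemma bound: assumes "2 \<le> j" "j \<le> m"
  shows "set (map fst v) \<subseteq> gensm T p m \<Longrightarrow> Dn (m - j) (act [] (phi m v)) \<le> length v"
proof (induction v rule: rev_induct)
  case Nil
  then show ?case by (simp add: Dn_Nil)
next
  case (snoc x v)
  have IH: "Dn (m - j) (act [] (phi m v)) \<le> length v" using snoc by simp
  have x: "fst x \<in> gensm T p m" using snoc.prems by simp
  have mj: "j + (m - j) = m" using assms by simp
  have "Dn (m - j) (act [] (phi m (v @ [x]))) \<le> Dn (m - j) (act [] (phi m v)) + 1"
  proof (cases "phil m x = []")
    case True
    then show ?thesis by simp
  next
    case False
    then have "phil m x \<in> GS (j + (m - j))" using phil_GS[OF x] assms mj by auto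
    then show ?thesis using lip[OF assms(1)] by simp
  qed
  then show ?case using IH by simp
qed

definition pwr :: "lt list \<Rightarrow> int \<Rightarrow> lt list" where
  "pwr W n = (if 0 \<le> n then concat (replicate (nat n) W) else concat (replicate (nat (- n)) (inv_word W)))"

lemma phi_replicate: "phi m (replicate c x) = concat (replicate c (phil m x))"
  by (induction c) auto
lemma phi_gen_pow: "phi m (gen_pow g n) = pwr (img m g) n"
  by (simp add: gen_pow_def pwr_def phi_replicate phil_def)
lemma funpow_concat_rep: "(psi ^^ k) (concat (replicate c W)) = concat (replicate c ((psi ^^ k) W))"
  by (induction c) auto
lemma funpow_pwr: "(psi ^^ k) (pwr W n) = pwr ((psi ^^ k) W) n"
  by (simp add: pwr_def funpow_concat_rep)
lemma ea_rep: "ea (concat (replicate c W)) = int c * ea W"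
  by (induction c) (auto simp: algebra_simps)
lemma et_rep: "et (concat (replicate c W)) = int c * et W"
  by (induction c) (auto simp: algebra_simps)
lemma ea_pwr: "ea (pwr W n) = n * ea W"
  by (simp add: pwr_def ea_rep)
lemma et_pwr: "et (pwr W n) = n * et W"
  by (simp add: pwr_def et_rep)

lemma Dn_psi: "Dn (Suc n) (act [] (psi W)) = Dn n (act [] W)"
proof -
  have "map (out 0) W = W" by (intro map_idI) (simp add: out_def)
  then have "sv (scan (act [] (psi W))) = act [] W" using word_lem[of "[]" W] by simp
  then show ?thesis by simp
qed

lemma Dn_funpow: "Dn n (act [] ((psi ^^ n) W)) = Dn 0 (act [] W)"
proof (induction n)
  case (Suc n)
  have "Dn (Suc n) (act [] ((psi ^^ Suc n) W)) = Dn (Suc n) (act [] (psi ((psi ^^ n) W)))" by simp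
  also have "\<dots> = Dn n (act [] ((psi ^^ n) W))" by (rule Dn_psi)
  finally show ?case using Suc by simp
qed simp

lemma gen_lift: assumes "1 \<le> l" "l \<le> j" "j \<le> m"
  shows "gen m l = (psi ^^ (m - j)) (gen j l)"
proof (cases "l = 1")
  case True
  then show ?thesis by (simp add: gen_def)
next
  case False
  have "m - l = (m - j) + (j - l)" using assms by simp
  then have "(psi ^^ (m - l)) [(True, True)] = (psi ^^ (m - j)) ((psi ^^ (j - l)) [(True, True)])"
    by (simp add: funpow_add)
  then show ?thesis using False by (simp add: gen_def)
qed

theorem lemma3p4:
  fixes T :: "'a set" and RH :: "'a word set" and d :: "nat \<Rightarrow> 'a"
    and p m i j :: nat and p' q :: int
  assumes finT: "finite T"
    and finR: "finite RH"
    and relsT: "\<forall>r \<in> RH. set (map fst r) \<subseteq> T"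
    and dT: "\<forall>k < p. d k \<in> T"
    and d_inj: "inj_on d {..<p}"
    and F_free: "\<forall>w :: (nat \<times> bool) list. w \<noteq> [] \<and> freely_reduced w \<and> set (map fst w) \<subseteq> {..<p}
                   \<longrightarrow> \<not> word_eq RH (map (\<lambda>(k, b). (d k, b)) w) []"
    and ij: "1 \<le> i" "i < j" "j \<le> m"
  shows "word_length (relsm RH T d p m) (gensm T p m) (gen_pow (S i) p' @ gen_pow (S j) q)
           = nat \<bar>p'\<bar> + nat \<bar>q\<bar>"
proof -
  have j2: "2 \<le> j" and m2: "2 \<le> m" using ij by auto
  define R where "R = relsm RH T d p m"
  define Sg where "Sg = gensm T p m"
  define w where "w = (gen_pow (S i) p' @ gen_pow (S j) q :: 'a gen word)"
  have SS: "S k \<in> Sg" if "1 \<le> k" "k \<le> m" for k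
  proof (cases "k = 1")
    case True
    then show ?thesis by (simp add: Sg_def gensm_def gens1_def)
  next
    case False
    then show ?thesis using that by (simp add: Sg_def gensm_def)
  qed
  have Si: "S i \<in> Sg" and Sj: "S j \<in> Sg" using SS ij by auto
  have wS: "set (map fst w) \<subseteq> Sg" using Si Sj by (auto simp: w_def gen_pow_def)
  have lenw: "length w = nat \<bar>p'\<bar> + nat \<bar>q\<bar>" by (simp add: w_def gen_pow_def)
  have val: "Dn (m - j) (act [] (phi m w)) = nat \<bar>p'\<bar> + nat \<bar>q\<bar>"
  proof -
    have ii: "img m (S i :: 'a gen) = (psi ^^ (m - j)) (gen j i)"
      using ij gen_lift[of i j m] by (simp add: img_def)
    have jj: "img m (S j :: 'a gen) = (psi ^^ (m - j)) (gen j j)"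
      using ij gen_lift[of j j m] by (simp add: img_def)
    have pw: "phi m w = (psi ^^ (m - j)) (pwr (gen j i) p' @ pwr (gen j j) q)"
      by (simp add: w_def phi_gen_pow ii jj funpow_pwr)
    have "Dn (m - j) (act [] (phi m w)) = Dn 0 (act [] (pwr (gen j i) p' @ pwr (gen j j) q))"
      unfolding pw by (rule Dn_funpow)
    also have "\<dots> = nat \<bar>p'\<bar> + nat \<bar>q\<bar>"
      using gen_exps_low[of i j] gen_exps_top[OF j2] ij by (simp add: ea_act et_act ea_pwr et_pwr)
    finally show ?thesis .
  qed
  have low: "nat \<bar>p'\<bar> + nat \<bar>q\<bar> \<le> length v" if v: "set (map fst v) \<subseteq> Sg" "word_eq R v w" for v
  proof -
    have "act [] (phi m v) = act [] (phi m w)"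
    proof (rule word_eq_act[OF v(2)])
      fix r :: "'a gen word" and y :: "lt list"
      assume "r \<in> R" "rd y"
      then show "act y (phi m r) = y" using rel_act[OF m2] unfolding R_def by blast
    qed simp
    then show ?thesis using bound[OF j2 ij(3) v(1)[unfolded Sg_def]] val by simp
  qed
  let ?P = "\<lambda>n. \<exists>v. set (map fst v) \<subseteq> Sg \<and> length v = n \<and> word_eq R v w"
  have Pw: "?P (length w)" using wS word_eq.refl by blast
  then have le: "(LEAST n. ?P n) \<le> length w" by (rule Least_le)
  from LeastI[of ?P, OF Pw] obtain v where "set (map fst v) \<subseteq> Sg" "length v = (LEAST n. ?P n)" "word_eq R v w"
    by blast
  then have "nat \<bar>p'\<bar> + nat \<bar>q\<bar> \<le> (LEAST n. ?P n)" using low by metis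
  then have "word_length R Sg w = nat \<bar>p'\<bar> + nat \<bar>q\<bar>" unfolding word_length_def using le lenw by simp
  then show ?thesis by (simp add: R_def Sg_def w_def)
qed

end
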